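(* Let $\eta>0$ be a constant and let $B\subseteq\mathbb T^d$ be a closed ball of radius $r>0$ centred at $0$ satisfying $n\,\mathrm{Vol}(B)=\Theta(r^dn)=\omega(1)$. Then with probability $1-(r^dn)^{-\Omega(\eta)}$ there is no vertex $v=(x_v,w_v)$ of the GIRG with $x_v\in\mathbb T^d\setminus B$ and $w_v\ge(\|x_v\|^dn)^{1/(\beta-1-\eta)}$.
   Context: Model (GIRG). Fix constants: $d\ge1$, $\beta\in(2,3)$, $\alpha\in(1,\infty]$, $w_{\min}>0$, a distribution $\mathcal D$ on $\mathbb R_{>0}$. Asymptotics refer to $n\to\infty$, with constants in $\Omega(\eta)$ depending only on model parameters. Ground space: torus $\mathbb T^d=\mathbb R^d/\mathbb Z^d$ with $\|x-y\|=\max_i\min\{|x_i-y_i|,1-|x_i-y_i|\}$, $\|x\|=\|x-0\|$; $\mathrm{Vol}$ = Lebesgue measure. Vertex positions: homogeneous Poisson point process of intensity $n$; independent weights $w_v\sim\mathcal D$ following a weak power law with exponent $\beta$: $\Pr[D\ge w_{\min}]=1$ and for every constant $\gamma>0$ there are constants $0<c_1\le c_2$ with $c_1w^{1-\beta-\gamma}\le\Pr[D\ge w]\le c_2w^{1-\beta+\gamma}$ for all $w\ge w_{\min}$. (Edges are irrelevant for this statement.) *)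

theory Defs
  imports "HOL-Probability.Probability" "HOL-Library.Landau_Symbols"
begin

text \<open>The torus T^d = R^d / Z^d, represented by the fundamental domain [0,1)^d.\<close>
definition torus :: "(real^'d) set" where
  "torus = {x. \<forall>i. 0 \<le> x $ i \<and> x $ i < 1}"

definition torus_norm :: "(real^'d) \<Rightarrow> real" where
  "torus_norm x = Max (range (\<lambda>i. min \<bar>x $ i\<bar> (1 - \<bar>x $ i\<bar>)))"

definition torus_ball :: "real \<Rightarrow> (real^'d) set" where
  "torus_ball r = {x \<in> torus. torus_norm x \<le> r}"

text \<open>Poisson probability P[Po(mu) = k] (valid also for mu = 0).\<close>
definition poisson_prob :: "real \<Rightarrow> nat \<Rightarrow> real" where
  "poisson_prob mu k = mu ^ k / fact k * exp (- mu)"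

definition girg_intensity :: "real \<Rightarrow> real measure \<Rightarrow> ((real^'d) \<times> real) set \<Rightarrow> real" where
  "girg_intensity n D A = n * measure (lborel \<Otimes>\<^sub>M D) (A \<inter> (torus \<times> UNIV))"

text \<open>V is the (random) vertex set of a GIRG: a Poisson point process on the torus with
  intensity n whose points carry independent weights with law D, i.e. a Poisson point process
  on T^d x R with intensity measure n Vol x D.\<close>
definition girg_vertices ::
  "'a measure \<Rightarrow> ('a \<Rightarrow> ((real^'d) \<times> real) set) \<Rightarrow> real \<Rightarrow> real measure \<Rightarrow> bool" where
  "girg_vertices M V n D \<longleftrightarrow>
     prob_space M \<and>
     (\<forall>\<omega>\<in>space M. finite (V \<omega>) \<and> V \<omega> \<subseteq> torus \<times> UNIV) \<and>
     (\<forall>(I :: nat set) A. finite I \<longrightarrow> (\<forall>i\<in>I. A i \<in> sets (lborel \<Otimes>\<^sub>M D)) \<longrightarrow>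
        disjoint_family_on A I \<longrightarrow>
        prob_space.indep_vars M (\<lambda>_. count_space UNIV) (\<lambda>i \<omega>. card (V \<omega> \<inter> A i)) I \<and>
        (\<forall>i\<in>I. \<forall>k. measure M {\<omega> \<in> space M. card (V \<omega> \<inter> A i) = k}
                     = poisson_prob (girg_intensity n D (A i)) k))"

definition weak_power_law :: "real measure \<Rightarrow> real \<Rightarrow> real \<Rightarrow> bool" where
  "weak_power_law D \<beta> wmin \<longleftrightarrow>
     prob_space D \<and> sets D = sets borel \<and> measure D {wmin..} = 1 \<and>
     (\<forall>\<gamma>>0. \<exists>c1 c2. 0 < c1 \<and> c1 \<le> c2 \<and>
        (\<forall>w\<ge>wmin. c1 * w powr (1 - \<beta> - \<gamma>) \<le> measure D {w..} \<and>
                   measure D {w..} \<le> c2 * w powr (1 - \<beta> + \<gamma>)))"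

end

theory Submission imports Defs begin

lemma torus_norm_meas[measurable]: "torus_norm \<in> borel_measurable (borel :: (real^'d) measure)"
  unfolding torus_norm_def by measurable

lemma torus_meas[measurable]: "torus \<in> sets (borel :: (real^'d) measure)"
proof -
  have "torus = {x::real^'d. \<forall>i. 0 \<le> x $ i \<and> x $ i < 1}" by (simp add: torus_def)
  also have "\<dots> \<in> sets borel" by measurable
  finally show ?thesis .
qed

lemma torus_norm_le_half: "torus_norm (x::real^'d) \<le> 1/2"
  unfolding torus_norm_def by (subst Max_le_iff) (auto simp: min_def)

lemma torus_norm_ge: "min \<bar>x $ i\<bar> (1 - \<bar>x $ i\<bar>) \<le> torus_norm (x::real^'d)"
  unfolding torus_norm_def by (rule Max_ge) auto


lemma torus_level_meas[measurable]: "{x\<in>torus. torus_norm x \<le> R} \<in> sets (lborel :: (real^'d) measure)"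
  by measurable

lemma vol_bound:
  assumes R: "0 \<le> R"
  shows "emeasure lborel {x\<in>(torus::(real^'d) set). torus_norm x \<le> R}
           \<le> ennreal (real CARD('d \<Rightarrow> bool) * R ^ CARD('d))"
proof -
  define lo :: "('d \<Rightarrow> bool) \<Rightarrow> real^'d" where "lo b = (\<chi> i. if b i then 0 else 1 - R)" for b
  define hi :: "('d \<Rightarrow> bool) \<Rightarrow> real^'d" where "hi b = (\<chi> i. if b i then R else 1)" for b
  have sub: "{x\<in>(torus::(real^'d) set). torus_norm x \<le> R} \<subseteq> (\<Union>b\<in>UNIV. cbox (lo b) (hi b))"
  proof
    fix x :: "real^'d" assume x: "x \<in> {x\<in>torus. torus_norm x \<le> R}"
    have "\<forall>i. lo (\<lambda>i. x $ i \<le> R) $ i \<le> x $ i \<and> x $ i \<le> hi (\<lambda>i. x $ i \<le> R) $ i"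
    proof
      fix i
      have "min \<bar>x $ i\<bar> (1 - \<bar>x $ i\<bar>) \<le> R" using torus_norm_ge[of x i] x by auto
      moreover have "0 \<le> x $ i" "x $ i < 1" using x by (auto simp: torus_def)
      ultimately show "lo (\<lambda>i. x $ i \<le> R) $ i \<le> x $ i \<and> x $ i \<le> hi (\<lambda>i. x $ i \<le> R) $ i"
        unfolding lo_def hi_def vec_lambda_beta by (cases "x $ i \<le> R") (simp_all add: min_def split: if_splits)
    qed
    then show "x \<in> (\<Union>b\<in>UNIV. cbox (lo b) (hi b))"
      by (auto simp: mem_box_cart)
  qed
  have box: "emeasure lborel (cbox (lo b) (hi b)) = ennreal (R ^ CARD('d))" for b
  proof -
    have ne: "cbox (lo b) (hi b) \<noteq> {}"
      using R by (auto simp: interval_ne_empty_cart lo_def hi_def)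
    have "emeasure lborel (cbox (lo b) (hi b)) = ennreal (measure lborel (cbox (lo b) (hi b)))"
      using emeasure_lborel_cbox_finite[of "lo b" "hi b"] by (simp add: emeasure_eq_ennreal_measure)
    also have "\<dots> = ennreal (\<Prod>i\<in>UNIV. hi b $ i - lo b $ i)"
      by (simp add: content_cbox_cart[OF ne])
    finally have "emeasure lborel (cbox (lo b) (hi b)) = ennreal (\<Prod>i\<in>UNIV. hi b $ i - lo b $ i)" .
    also have "(\<Prod>i\<in>UNIV. hi b $ i - lo b $ i) = (\<Prod>i\<in>(UNIV::'d set). R)"
      by (rule prod.cong) (auto simp: lo_def hi_def)
    finally show ?thesis by simp
  qed
  have "emeasure lborel {x\<in>(torus::(real^'d) set). torus_norm x \<le> R} \<le> emeasure lborel (\<Union>b\<in>UNIV. cbox (lo b) (hi b))"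
    by (rule emeasure_mono[OF sub]) auto
  also have "\<dots> \<le> (\<Sum>b\<in>UNIV. emeasure lborel (cbox (lo b) (hi b)))"
    by (rule emeasure_subadditive_finite) auto
  also have "\<dots> = ennreal (real CARD('d \<Rightarrow> bool) * R ^ CARD('d))"
    by (simp add: box ennreal_of_nat_eq_real_of_nat R ennreal_mult)
  finally show ?thesis .
qed

lemma term_calc:
  fixes r n s C c2 :: real and d k :: nat
  assumes r: "0 < r" and n: "0 < n"
  shows "n * (C * (r * 2 ^ (k+1)) ^ d * (c2 * ((r * 2 ^ k) ^ d * n) powr (- s)))
       = C * 2 ^ d * c2 * (r ^ d * n) powr (1 - s) * ((2 ^ d) powr (1 - s)) ^ k"
proof -
  have a: "0 < r ^ d * n" using r n by simp
  have e1: "(r * 2 ^ (k+1)) ^ d = 2 ^ d * (r ^ d) * ((2::real) ^ d) ^ k"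
    by (simp add: power_mult_distrib power_add power_mult[symmetric] mult.commute mult.left_commute)
  have e2: "((r * 2 ^ k) ^ d * n) powr (- s) = (r ^ d * n) powr (- s) * (((2::real) ^ d) powr (- s)) ^ k"
  proof -
    have "(r * 2 ^ k) ^ d * n = (r ^ d * n) * ((2::real) ^ d) ^ k"
      by (simp add: power_mult_distrib power_mult[symmetric] mult.commute mult.left_commute)
    moreover have "(((2::real) ^ d) ^ k) powr (- s) = (((2::real) ^ d) powr (- s)) ^ k"
      by (simp add: powr_power powr_realpow[symmetric] powr_powr mult.commute mult.left_commute)
    ultimately show ?thesis by (simp only: powr_mult)
  qed
  have e3: "n * r ^ d * (r ^ d * n) powr (- s) = (r ^ d * n) powr (1 - s)"
  proof -
    have "(r ^ d * n) powr (1 - s) = (r ^ d * n) powr 1 * (r ^ d * n) powr (- s)"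
      by (metis diff_conv_add_uminus powr_add)
    then show ?thesis using a by (simp add: mult.commute)
  qed
  have e4: "((2::real) ^ d) ^ k * (((2::real) ^ d) powr (- s)) ^ k = ((2 ^ d) powr (1 - s)) ^ k"
  proof -
    have "((2::real) ^ d) = (2 ^ d) powr 1" by simp
    then have "((2::real) ^ d) * ((2 ^ d) powr (- s)) = (2 ^ d) powr (1 - s)"
      by (metis diff_conv_add_uminus powr_add)
    then show ?thesis by (simp add: power_mult_distrib[symmetric])
  qed
  have "n * (C * (r * 2 ^ (k+1)) ^ d * (c2 * ((r * 2 ^ k) ^ d * n) powr (- s)))
      = C * 2 ^ d * c2 * (n * r ^ d * (r ^ d * n) powr (- s)) * (((2::real) ^ d) ^ k * (((2::real) ^ d) powr (- s)) ^ k)"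
    unfolding e1 e2 by (simp add: algebra_simps)
  also have "\<dots> = C * 2 ^ d * c2 * (r ^ d * n) powr (1 - s) * ((2 ^ d) powr (1 - s)) ^ k"
    unfolding e3 e4 ..
  finally show ?thesis .
qed

definition badset :: "real \<Rightarrow> real \<Rightarrow> real \<Rightarrow> ((real^'d) \<times> real) set" where
  "badset e r n = {(x, w). x \<in> torus - torus_ball r \<and> (torus_norm x ^ CARD('d) * n) powr (1 / e) \<le> w}"

lemma badset_meas:
  assumes "sets D = sets borel"
  shows "(badset e r n :: ((real^'d) \<times> real) set) \<in> sets (lborel \<Otimes>\<^sub>M D)"
proof -
  have h1: "sets (lborel \<Otimes>\<^sub>M D) = sets (lborel \<Otimes>\<^sub>M (borel :: real measure))"
    by (rule sets_pair_measure_cong) (simp_all add: assms)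
  have h2: "{p \<in> space (lborel \<Otimes>\<^sub>M (borel :: real measure)). fst p \<in> (torus :: (real^'d) set) \<and> \<not> torus_norm (fst p) \<le> r
       \<and> (torus_norm (fst p) ^ CARD('d) * n) powr (1 / e) \<le> snd p} \<in> sets (lborel \<Otimes>\<^sub>M (borel :: real measure))"
  proof -
    let ?M = "lborel \<Otimes>\<^sub>M (borel :: real measure)"
    have f: "fst \<in> measurable ?M (borel :: (real^'d) measure)"
      using measurable_fst[of "lborel :: (real^'d) measure" "borel :: real measure"] by (simp add: measurable_lborel1)
    have tn: "(\<lambda>p. torus_norm (fst p :: real^'d)) \<in> borel_measurable ?M"
      by (rule measurable_compose[OF f torus_norm_meas])
    have t: "Measurable.pred ?M (\<lambda>p. fst p \<in> (torus :: (real^'d) set))"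
      by (rule pred_sets2[OF torus_meas f])
    have g: "(\<lambda>p. (torus_norm (fst p :: real^'d) ^ CARD('d) * n) powr (1 / e)) \<in> borel_measurable ?M"
      by (intro powr_real_measurable borel_measurable_times borel_measurable_power tn) auto
    have sn: "snd \<in> borel_measurable ?M" by (rule measurable_snd)
    have "Measurable.pred ?M (\<lambda>p. fst p \<in> (torus :: (real^'d) set) \<and> \<not> torus_norm (fst p) \<le> r
       \<and> (torus_norm (fst p :: real^'d) ^ CARD('d) * n) powr (1 / e) \<le> snd p)"
    proof -
      have p1: "Measurable.pred ?M (\<lambda>p. torus_norm (fst p :: real^'d) \<le> r)"
        unfolding pred_def by (rule borel_measurable_le[OF tn measurable_const]) simp
      have p2: "Measurable.pred ?M (\<lambda>p. (torus_norm (fst p :: real^'d) ^ CARD('d) * n) powr (1 / e) \<le> snd p)"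
        unfolding pred_def by (rule borel_measurable_le[OF g sn])
      show ?thesis by (intro pred_intros_logic(3) pred_intros_logic(2) t p1 p2)
    qed
    then show ?thesis unfolding pred_def .
  qed
  have h3: "badset e r n = {p \<in> space (lborel \<Otimes>\<^sub>M (borel :: real measure)). fst p \<in> (torus :: (real^'d) set) \<and> \<not> torus_norm (fst p) \<le> r
       \<and> (torus_norm (fst p) ^ CARD('d) * n) powr (1 / e) \<le> snd p}"
    unfolding badset_def torus_ball_def space_pair_measure by auto
  show ?thesis unfolding h3 h1 by (rule h2)
qed

lemma badset_bound:
  fixes D :: "real measure" and e p c2 r n wmin :: real
  assumes D: "prob_space D" "sets D = sets borel"
    and tail: "\<And>w. w \<ge> wmin \<Longrightarrow> measure D {w..} \<le> c2 * w powr (-p)"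
    and e: "0 < e" and pe: "e < p" and r: "0 < r" and n: "0 < n" and c2: "0 \<le> c2"
    and thr: "wmin \<le> (r ^ CARD('d) * n) powr (1/e)"
  shows "n * measure (lborel \<Otimes>\<^sub>M D) (badset e r n :: ((real^'d)\<times>real) set)
      \<le> real CARD('d\<Rightarrow>bool) * 2^CARD('d) * c2 / (1 - (2^CARD('d)) powr (1 - p/e))
         * (r^CARD('d) * n) powr (1 - p/e)"
proof -
  define d where "d = CARD('d)"
  define s where "s = p / e"
  define q :: real where "q = (2^d) powr (1 - s)"
  define C where "C = real CARD('d\<Rightarrow>bool)"
  have s1: "1 < s" using e pe by (simp add: s_def)
  have d1: "1 \<le> d" by (simp add: d_def Suc_le_eq)
  have q0: "0 \<le> q" by (simp add: q_def)
  have q1: "q < 1" unfolding q_def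
  proof (rule powr_less_one)
    have "(2::real) ^ 1 \<le> 2 ^ d" using d1 by (intro power_increasing) auto
    then show "1 < (2::real) ^ d" by simp
  qed (use s1 in simp)
  have C0: "0 \<le> C" by (simp add: C_def)
  obtain N where N: "1 / (2 * r) < 2 ^ N" using real_arch_pow[of 2 "1 / (2 * r)"] by auto
  have N': "1/2 < r * 2 ^ N" using N r by (simp add: field_simps)
  define T :: "nat \<Rightarrow> (real^'d) set" where "T k = {x\<in>torus. torus_norm x \<le> r * 2 ^ (k+1)}" for k
  define wk where "wk k = ((r * 2 ^ k) ^ d * n) powr (1/e)" for k
  have wk_ge: "wmin \<le> wk k" for k
  proof -
    have "r ^ d * n \<le> (r * 2 ^ k) ^ d * n"
      using r n by (intro mult_right_mono power_mono) auto
    then have "(r ^ d * n) powr (1/e) \<le> wk k"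
      unfolding wk_def using r n e by (intro powr_mono2) auto
    then show ?thesis using thr by (simp add: d_def)
  qed
  have cover: "(badset e r n :: ((real^'d)\<times>real) set) \<subseteq> (\<Union>k\<in>{..<N}. T k \<times> {wk k..})"
  proof
    fix z assume z: "z \<in> (badset e r n :: ((real^'d)\<times>real) set)"
    obtain x w where zxw: "z = (x, w)" by (cases z)
    have xt: "x \<in> torus" and xr: "r < torus_norm x"
      and xw: "(torus_norm x ^ d * n) powr (1 / e) \<le> w"
      using z by (auto simp: zxw badset_def torus_ball_def d_def)
    define K where "K = {k. r * 2 ^ k < torus_norm x}"
    have KN: "K \<subseteq> {..<N}"
    proof
      fix k assume "k \<in> K"
      then have "r * 2 ^ k < r * 2 ^ N" using torus_norm_le_half[of x] N' by (auto simp: K_def)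
      then have "(2::real) ^ k < 2 ^ N" using r by simp
      then show "k \<in> {..<N}" by (auto dest: power_less_imp_less_exp[rotated])
    qed
    have finK: "finite K" using KN finite_subset by blast
    have K0: "0 \<in> K" using xr by (simp add: K_def)
    define k where "k = Max K"
    have kK: "k \<in> K" using finK K0 unfolding k_def by (intro Max_in) auto
    have "Suc k \<notin> K" using finK kK by (metis Max_ge k_def n_not_Suc_n le_antisym le_Suc_eq)
    then have up: "torus_norm x \<le> r * 2 ^ (k+1)" by (simp add: K_def)
    have lo: "r * 2 ^ k < torus_norm x" using kK by (simp add: K_def)
    have "wk k \<le> (torus_norm x ^ d * n) powr (1 / e)"
      unfolding wk_def using r n e lo by (intro powr_mono2 mult_right_mono power_mono) auto
    then have "wk k \<le> w" using xw by simp
    moreover have "k < N" using KN kK by auto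
    ultimately show "z \<in> (\<Union>k\<in>{..<N}. T k \<times> {wk k..})"
      using xt up by (auto simp: zxw T_def)
  qed
  interpret D: prob_space D by (rule D(1))
  interpret Ds: sigma_finite_measure D by (rule prob_space_imp_sigma_finite[OF D(1)])
  have Tm: "T k \<in> sets lborel" for k unfolding T_def by (rule torus_level_meas)
  have Wm: "{wk k..} \<in> sets D" for k using D(2) by simp
  define a where "a k = C * (r * 2 ^ (k+1)) ^ d * (c2 * ((r * 2 ^ k) ^ d * n) powr (- s))" for k
  have a0: "0 \<le> a k" for k using C0 r c2 by (simp add: a_def)
  have each: "emeasure (lborel \<Otimes>\<^sub>M D) (T k \<times> {wk k..}) \<le> ennreal (a k)" for k
  proof -
    have "emeasure (lborel \<Otimes>\<^sub>M D) (T k \<times> {wk k..}) = emeasure lborel (T k) * emeasure D {wk k..}"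
      by (rule sigma_finite_measure.emeasure_pair_measure_Times[OF prob_space_imp_sigma_finite[OF D(1)] Tm Wm])
    moreover have e1: "emeasure lborel (T k) \<le> ennreal (C * (r * 2 ^ (k+1)) ^ d)"
      unfolding T_def C_def d_def using vol_bound[of "r * 2 ^ (k+1)"] r by simp
    moreover have e2: "emeasure D {wk k..} \<le> ennreal (c2 * ((r * 2 ^ k) ^ d * n) powr (- s))"
    proof -
      have "measure D {wk k..} \<le> c2 * wk k powr (-p)" using tail[OF wk_ge] .
      also have "wk k powr (-p) = ((r * 2 ^ k) ^ d * n) powr (- s)"
        unfolding wk_def s_def by (simp add: powr_powr)
      finally show ?thesis by (simp add: D.emeasure_eq_measure ennreal_leI)
    qed
    ultimately have "emeasure (lborel \<Otimes>\<^sub>M D) (T k \<times> {wk k..}) \<le> ennreal (C * (r * 2 ^ (k+1)) ^ d) * ennreal (c2 * ((r * 2 ^ k) ^ d * n) powr (- s))"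
      by (simp add: mult_mono)
    also have "\<dots> = ennreal (a k)" unfolding a_def using C0 c2 r by (simp add: ennreal_mult[symmetric])
    finally show ?thesis .
  qed
  have "emeasure (lborel \<Otimes>\<^sub>M D) (badset e r n :: ((real^'d)\<times>real) set)
        \<le> emeasure (lborel \<Otimes>\<^sub>M D) (\<Union>k\<in>{..<N}. T k \<times> {wk k..})"
    by (rule emeasure_mono[OF cover], rule sets.finite_UN, simp, rule pair_measureI[OF Tm Wm])
  also have "\<dots> \<le> (\<Sum>k\<in>{..<N}. emeasure (lborel \<Otimes>\<^sub>M D) (T k \<times> {wk k..}))"
    by (rule emeasure_subadditive_finite) (simp, use pair_measureI[OF Tm Wm] in blast)
  also have "\<dots> \<le> (\<Sum>k\<in>{..<N}. ennreal (a k))"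
    by (rule sum_mono) (rule each)
  also have "\<dots> = ennreal (\<Sum>k\<in>{..<N}. a k)" using a0 by simp
  finally have em: "emeasure (lborel \<Otimes>\<^sub>M D) (badset e r n :: ((real^'d)\<times>real) set) \<le> ennreal (\<Sum>k\<in>{..<N}. a k)" .
  have ms: "measure (lborel \<Otimes>\<^sub>M D) (badset e r n :: ((real^'d)\<times>real) set) \<le> (\<Sum>k\<in>{..<N}. a k)"
    unfolding measure_def by (rule enn2real_leI[OF sum_nonneg em]) (use a0 in auto)
  have "n * measure (lborel \<Otimes>\<^sub>M D) (badset e r n :: ((real^'d)\<times>real) set) \<le> n * (\<Sum>k\<in>{..<N}. a k)"
    using ms n by simp
  also have "\<dots> = (\<Sum>k\<in>{..<N}. C * 2 ^ d * c2 * (r ^ d * n) powr (1 - s) * q ^ k)"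
    unfolding sum_distrib_left a_def q_def by (rule sum.cong[OF refl], rule term_calc[OF r n])
  also have "\<dots> = C * 2 ^ d * c2 * (r ^ d * n) powr (1 - s) * (\<Sum>k\<in>{..<N}. q ^ k)"
    by (simp add: sum_distrib_left)
  also have "\<dots> \<le> C * 2 ^ d * c2 * (r ^ d * n) powr (1 - s) * (1 / (1 - q))"
  proof (rule mult_left_mono)
    have "(\<Sum>k\<in>{..<N}. q ^ k) = (1 - q ^ N) / (1 - q)" using q1 by (simp add: sum_gp_strict)
    also have "\<dots> \<le> 1 / (1 - q)" using q0 q1 by (intro divide_right_mono) auto
    finally show "(\<Sum>k\<in>{..<N}. q ^ k) \<le> 1 / (1 - q)" .
  qed (use C0 c2 in simp)
  also have "\<dots> = real CARD('d\<Rightarrow>bool) * 2^CARD('d) * c2 / (1 - (2^CARD('d)) powr (1 - p/e))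
         * (r^CARD('d) * n) powr (1 - p/e)"
    by (simp add: C_def d_def q_def s_def)
  finally show ?thesis .
qed

lemma per_n:
  fixes M :: "'a measure" and V :: "'a \<Rightarrow> ((real^'d) \<times> real) set" and D :: "real measure"
    and e r n :: real
  assumes G: "girg_vertices M V n D" and SD: "sets D = sets borel"
  defines "Bad \<equiv> {\<omega> \<in> space M. \<exists>(x, w) \<in> V \<omega>.
                        x \<in> torus - torus_ball r \<and>
                        w \<ge> (torus_norm x ^ CARD('d) * n) powr (1 / e)}"
  shows "Bad \<in> sets M \<and> measure M Bad \<le> n * measure (lborel \<Otimes>\<^sub>M D) (badset e r n :: ((real^'d)\<times>real) set)"
proof -
  let ?A = "badset e r n :: ((real^'d)\<times>real) set"
  have PS: "prob_space M" and fin: "\<And>\<omega>. \<omega> \<in> space M \<Longrightarrow> finite (V \<omega>)"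
    using G by (auto simp: girg_vertices_def)
  interpret P: prob_space M by (rule PS)
  have Am: "?A \<in> sets (lborel \<Otimes>\<^sub>M D)" by (rule badset_meas[OF SD])
  have G3: "P.indep_vars (\<lambda>_. count_space UNIV) (\<lambda>i \<omega>. card (V \<omega> \<inter> (\<lambda>_. ?A) i)) {0::nat} \<and>
        (\<forall>i\<in>{0::nat}. \<forall>k. measure M {\<omega> \<in> space M. card (V \<omega> \<inter> (\<lambda>_. ?A) i) = k}
                     = poisson_prob (girg_intensity n D ((\<lambda>_. ?A) i)) k)"
  proof -
    have H: "\<forall>(I :: nat set) A. finite I \<longrightarrow> (\<forall>i\<in>I. A i \<in> sets (lborel \<Otimes>\<^sub>M D)) \<longrightarrow>
        disjoint_family_on A I \<longrightarrow>
        P.indep_vars (\<lambda>_. count_space UNIV) (\<lambda>i \<omega>. card (V \<omega> \<inter> A i)) I \<and>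
        (\<forall>i\<in>I. \<forall>k. measure M {\<omega> \<in> space M. card (V \<omega> \<inter> A i) = k}
                     = poisson_prob (girg_intensity n D (A i)) k)"
      using G unfolding girg_vertices_def by blast
    show ?thesis
      by (rule H[rule_format]) (use Am in \<open>auto simp: disjoint_family_on_def\<close>)
  qed
  have meas: "(\<lambda>\<omega>. card (V \<omega> \<inter> ?A)) \<in> measurable M (count_space UNIV)"
    using G3 unfolding P.indep_vars_def by auto
  have pois: "measure M {\<omega> \<in> space M. card (V \<omega> \<inter> ?A) = 0} = poisson_prob (girg_intensity n D ?A) 0"
    using G3 by auto
  define Z where "Z = {\<omega> \<in> space M. card (V \<omega> \<inter> ?A) = 0}"
  have Zm: "Z \<in> sets M"
  proof -
    have "Z = (\<lambda>\<omega>. card (V \<omega> \<inter> ?A)) -` {0} \<inter> space M" by (auto simp: Z_def)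
    then show ?thesis using measurable_sets[OF meas, of "{0}"] by simp
  qed
  have BZ: "Bad = space M - Z"
  proof -
    have ch: "(card (V \<omega> \<inter> ?A) = 0) \<longleftrightarrow> \<not> (\<exists>(x, w) \<in> V \<omega>. x \<in> torus - torus_ball r \<and>
                        w \<ge> (torus_norm x ^ CARD('d) * n) powr (1 / e))" if "\<omega> \<in> space M" for \<omega>
      using fin[OF that] by (auto simp: badset_def)
    show ?thesis unfolding Bad_def Z_def
    proof (rule set_eqI)
      fix \<omega>
      show "\<omega> \<in> {\<omega> \<in> space M. \<exists>(x, w) \<in> V \<omega>. x \<in> torus - torus_ball r \<and>
                        w \<ge> (torus_norm x ^ CARD('d) * n) powr (1 / e)} \<longleftrightarrow>
            \<omega> \<in> space M - {\<omega> \<in> space M. card (V \<omega> \<inter> ?A) = 0}"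
        using ch[of \<omega>] by blast
    qed
  qed
  have Bm: "Bad \<in> sets M" using Zm BZ by auto
  have sub: "?A \<inter> (torus \<times> UNIV) = ?A" by (auto simp: badset_def)
  define \<mu> where "\<mu> = n * measure (lborel \<Otimes>\<^sub>M D) ?A"
  have "measure M Bad = 1 - measure M Z" using BZ P.prob_compl[OF Zm] by simp
  also have "measure M Z = exp (- \<mu>)"
    using pois unfolding Z_def by (simp add: poisson_prob_def girg_intensity_def sub \<mu>_def)
  also have "1 - exp (- \<mu>) \<le> \<mu>" using exp_ge_add_one_self[of "- \<mu>"] by simp
  finally show ?thesis using Bm by (simp add: \<mu>_def)
qed


lemma final_ineq:
  fixes a K0 e p \<eta> :: real
  assumes a1: "1 \<le> a" and e: "0 < e" "e < 2" and p: "p = e + \<eta>/2" and eta: "0 < \<eta>"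
    and aK: "(max K0 1) powr (8/\<eta>) \<le> a"
  shows "K0 * a powr (1 - p/e) \<le> a powr (- (1/8) * \<eta>)"
proof -
  have ex: "1 - p/e \<le> - \<eta>/4"
  proof -
    have "1 - p/e = - (\<eta>/2)/e" using e by (simp add: p field_simps)
    also have "\<dots> \<le> - \<eta>/4" using e eta by (simp add: field_simps)
    finally show ?thesis .
  qed
  have A1: "a powr (1 - p/e) \<le> a powr (- \<eta>/4)" using a1 ex by (intro powr_mono) auto
  have A2: "max K0 1 \<le> a powr (\<eta>/8)"
  proof -
    have "max K0 1 = ((max K0 1) powr (8/\<eta>)) powr (\<eta>/8)" using eta by (simp add: powr_powr)
    also have "\<dots> \<le> a powr (\<eta>/8)" using aK eta by (intro powr_mono2) auto
    finally show ?thesis .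
  qed
  have "K0 * a powr (1 - p/e) \<le> max K0 1 * a powr (- \<eta>/4)"
    using A1 by (intro mult_mono) auto
  also have "\<dots> \<le> a powr (\<eta>/8) * a powr (- \<eta>/4)"
    using A2 by (intro mult_right_mono) auto
  also have "\<dots> = a powr (- (1/8) * \<eta>)"
    by (simp add: powr_add[symmetric])
  finally show ?thesis .
qed

theorem lemma5p4:
  fixes \<beta> wmin :: real and D :: "real measure"
    and M :: "nat \<Rightarrow> 'a measure" and V :: "nat \<Rightarrow> 'a \<Rightarrow> ((real^'d) \<times> real) set"
  assumes "2 < \<beta>" and "\<beta> < 3" and "0 < wmin"
    and "weak_power_law D \<beta> wmin"
    and "\<And>n. girg_vertices (M n) (V n) (real n) D"
  shows "\<exists>c>0. \<forall>\<eta>. 0 < \<eta> \<and> \<eta> < \<beta> - 1 \<longrightarrow>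
           (\<forall>r :: nat \<Rightarrow> real. (\<forall>n. 0 < r n) \<longrightarrow>
              (\<lambda>n. real n * measure lborel (torus_ball (r n) :: (real^'d) set))
                 \<in> \<Theta>(\<lambda>n. r n ^ CARD('d) * real n) \<longrightarrow>
              filterlim (\<lambda>n. real n * measure lborel (torus_ball (r n) :: (real^'d) set))
                 at_top sequentially \<longrightarrow>
              (\<forall>\<^sub>F n in sequentially.
                 (let Bad = {\<omega> \<in> space (M n). \<exists>(x, w) \<in> V n \<omega>.
                        x \<in> torus - torus_ball (r n) \<and>
                        w \<ge> (torus_norm x ^ CARD('d) * real n) powr (1 / (\<beta> - 1 - \<eta>))}
                  in Bad \<in> sets (M n) \<and>
                     measure (M n) Bad \<le> (r n ^ CARD('d) * real n) powr (- c * \<eta>))))"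
proof (rule exI[of _ "1/8"], intro conjI allI impI)
  show "(0::real) < 1/8" by simp
  fix \<eta> :: real and r :: "nat \<Rightarrow> real"
  assume eta: "0 < \<eta> \<and> \<eta> < \<beta> - 1" and rpos: "\<forall>n. 0 < r n"
    and Th: "(\<lambda>n. real n * measure lborel (torus_ball (r n) :: (real^'d) set))
                 \<in> \<Theta>(\<lambda>n. r n ^ CARD('d) * real n)"
    and Lim: "filterlim (\<lambda>n. real n * measure lborel (torus_ball (r n) :: (real^'d) set))
                 at_top sequentially"
  define e where "e = \<beta> - 1 - \<eta>"
  define p where "p = e + \<eta>/2"
  have e0: "0 < e" and e2: "e < 2" using eta assms(2) by (auto simp: e_def)
  have pe: "e < p" using eta by (simp add: p_def)
  have WPL: "prob_space D" "sets D = sets borel" and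
    ex: "\<exists>c1 c2. 0 < c1 \<and> c1 \<le> c2 \<and>
        (\<forall>w\<ge>wmin. c1 * w powr (1 - \<beta> - \<eta>/2) \<le> measure D {w..} \<and>
                   measure D {w..} \<le> c2 * w powr (1 - \<beta> + \<eta>/2))"
    using assms(4) eta unfolding weak_power_law_def by auto
  obtain c1 c2 where c12: "0 < c1" "c1 \<le> c2" and
    tl: "\<And>w. w \<ge> wmin \<Longrightarrow> measure D {w..} \<le> c2 * w powr (1 - \<beta> + \<eta>/2)"
    using ex by blast
  have c2: "0 \<le> c2" using c12 by simp
  have tail: "\<And>w. w \<ge> wmin \<Longrightarrow> measure D {w..} \<le> c2 * w powr (- p)"
  proof -
    fix w :: real assume "w \<ge> wmin"
    moreover have "1 - \<beta> + \<eta>/2 = - p" by (simp add: p_def e_def)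
    ultimately show "measure D {w..} \<le> c2 * w powr (- p)" using tl by metis
  qed
  define K0 where "K0 = real CARD('d\<Rightarrow>bool) * 2^CARD('d) * c2 / (1 - (2^CARD('d)) powr (1 - p/e))"
  define Z0 where "Z0 = max 1 (max (wmin powr e) ((max K0 1) powr (8/\<eta>)))"
  define a where "a n = r n ^ CARD('d) * real n" for n
  have Z0: "1 \<le> Z0" by (simp add: Z0_def)
  obtain C where C: "C > 0" and Cev: "\<forall>\<^sub>F n in sequentially.
      norm (real n * measure lborel (torus_ball (r n) :: (real^'d) set)) \<le> C * norm (a n)"
    using bigthetaD1[OF Th] unfolding a_def by (elim landau_o.bigE) auto
  have Lev: "\<forall>\<^sub>F n in sequentially. C * Z0 \<le> real n * measure lborel (torus_ball (r n) :: (real^'d) set)"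
    using Lim unfolding filterlim_at_top by blast
  have aev: "\<forall>\<^sub>F n in sequentially. Z0 \<le> a n"
    using Cev Lev
  proof eventually_elim
    case (elim n)
    have "0 \<le> a n" using rpos by (simp add: a_def less_imp_le)
    then have "C * Z0 \<le> C * a n" using elim by simp
    then show ?case using C by simp
  qed
  show "\<forall>\<^sub>F n in sequentially.
                 (let Bad = {\<omega> \<in> space (M n). \<exists>(x, w) \<in> V n \<omega>.
                        x \<in> torus - torus_ball (r n) \<and>
                        w \<ge> (torus_norm x ^ CARD('d) * real n) powr (1 / (\<beta> - 1 - \<eta>))}
                  in Bad \<in> sets (M n) \<and>
                     measure (M n) Bad \<le> (r n ^ CARD('d) * real n) powr (- (1/8) * \<eta>))"
    using aev
  proof eventually_elim
    case (elim n)
    have an1: "1 \<le> a n" using elim Z0 by simp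
    have n0: "0 < real n"
    proof (rule ccontr)
      assume "\<not> 0 < real n" then have "a n = 0" by (simp add: a_def)
      then show False using an1 by simp
    qed
    have thr: "wmin \<le> (r n ^ CARD('d) * real n) powr (1/e)"
    proof -
      have "wmin = (wmin powr e) powr (1/e)" using e0 assms(3) by (simp add: powr_powr)
      also have "\<dots> \<le> a n powr (1/e)" using elim e0 by (intro powr_mono2) (auto simp: Z0_def)
      finally show ?thesis by (simp add: a_def)
    qed
    note PN = per_n[OF assms(5)[of n] WPL(2), of "r n" e]
    have BB: "real n * measure (lborel \<Otimes>\<^sub>M D) (badset e (r n) (real n) :: ((real^'d)\<times>real) set) \<le> K0 * a n powr (1 - p/e)"
      using badset_bound[OF WPL tail e0 pe rpos[rule_format] n0 c2 thr] unfolding K0_def a_def by simp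
    have FI: "K0 * a n powr (1 - p/e) \<le> a n powr (- (1/8) * \<eta>)"
      by (rule final_ineq[OF an1 e0 e2 p_def]) (use eta elim in \<open>auto simp: Z0_def\<close>)
    show ?case using PN BB FI unfolding Let_def e_def a_def by auto
  qed
qed

end
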